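(* Let $P\subset\mathbb{R}^k$ be a polytope. Then $\operatorname{ic}(P)\geqslant 2\sqrt{\operatorname{trdeg}(P)}-k$.
   Context: For a polytope $P\subset\mathbb{R}^d$, $\mathbb{Q}(P)$ is the field obtained from $\mathbb{Q}$ by adjoining all coordinates of all vertices of $P$, and $\operatorname{trdeg}(P)$ is the transcendence degree of $\mathbb{Q}(P)$ over $\mathbb{Q}$. For polytopes $P\subset\mathbb{R}^d$ and $Q\subset\mathbb{R}^N$ ($N\geqslant d$), $P$ is a slice of $Q$ if $P\times\{0\}=Q\cap H$ where $H=\{x\in\mathbb{R}^N: x_{d+1}=\cdots=x_N=0\}$. The intersection complexity $\operatorname{ic}(P)$ is the smallest integer $k$ such that $P$ is a slice of a polytope with $k$ vertices. *)

theory Defs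
  imports Complex_Main
begin

text \<open>Points of R^N are represented as functions nat => real vanishing at all
  indices >= N (coordinates are indexed 0..N-1).\<close>

definition R_space :: "nat \<Rightarrow> (nat \<Rightarrow> real) set" where
  "R_space N = {x. \<forall>i\<ge>N. x i = 0}"

definition conv_hull :: "(nat \<Rightarrow> real) set \<Rightarrow> (nat \<Rightarrow> real) set" where
  "conv_hull V = {x. \<exists>u. (\<forall>v\<in>V. 0 \<le> u v) \<and> sum u V = 1 \<and>
                        x = (\<lambda>i. \<Sum>v\<in>V. u v * v i)}"

definition is_polytope :: "nat \<Rightarrow> (nat \<Rightarrow> real) set \<Rightarrow> bool" where
  "is_polytope d P \<longleftrightarrow> (\<exists>V. finite V \<and> V \<subseteq> R_space d \<and> P = conv_hull V)"

definition vertices :: "(nat \<Rightarrow> real) set \<Rightarrow> (nat \<Rightarrow> real) set" where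
  "vertices P = {v\<in>P. \<not> (\<exists>a\<in>P. \<exists>b\<in>P. a \<noteq> b \<and>
       (\<exists>t::real. 0 < t \<and> t < 1 \<and> v = (\<lambda>i. (1 - t) * a i + t * b i)))}"

definition is_slice :: "nat \<Rightarrow> (nat \<Rightarrow> real) set \<Rightarrow> nat \<Rightarrow> (nat \<Rightarrow> real) set \<Rightarrow> bool" where
  "is_slice d P N Q \<longleftrightarrow> d \<le> N \<and> is_polytope d P \<and> is_polytope N Q \<and>
      P = {x\<in>Q. \<forall>i. d \<le> i \<and> i < N \<longrightarrow> x i = 0}"

definition ic :: "nat \<Rightarrow> (nat \<Rightarrow> real) set \<Rightarrow> nat" where
  "ic d P = (LEAST n. \<exists>N Q. is_slice d P N Q \<and> card (vertices Q) = n)"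

definition gen_field :: "real set \<Rightarrow> real set" where
  "gen_field S = \<Inter>{F. S \<subseteq> F \<and> 0 \<in> F \<and> 1 \<in> F \<and>
      (\<forall>x\<in>F. \<forall>y\<in>F. x + y \<in> F \<and> - x \<in> F \<and> x * y \<in> F) \<and>
      (\<forall>x\<in>F. x \<noteq> 0 \<longrightarrow> inverse x \<in> F)}"

definition field_of :: "(nat \<Rightarrow> real) set \<Rightarrow> real set" where
  "field_of P = gen_field {v i | v i. v \<in> vertices P}"

text \<open>Algebraic independence over Q of a finite set S of reals: every polynomial
  with rational coefficients in the variables S (monomials = exponent maps
  S -> nat, zero outside S) vanishing on S has all coefficients zero.\<close>
definition alg_indep_rat :: "real set \<Rightarrow> bool" where
  "alg_indep_rat S \<longleftrightarrow> finite S \<and>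
     (\<forall>(M :: (real \<Rightarrow> nat) set) (c :: (real \<Rightarrow> nat) \<Rightarrow> rat).
        finite M \<and> (\<forall>m\<in>M. \<forall>x. x \<notin> S \<longrightarrow> m x = 0) \<and>
        (\<Sum>m\<in>M. of_rat (c m) * (\<Prod>s\<in>S. s ^ m s)) = 0
        \<longrightarrow> (\<forall>m\<in>M. c m = 0))"

definition trdeg_field :: "real set \<Rightarrow> nat" where
  "trdeg_field F = Sup {card S | S. S \<subseteq> F \<and> alg_indep_rat S}"

definition trdeg :: "(nat \<Rightarrow> real) set \<Rightarrow> nat" where
  "trdeg P = trdeg_field (field_of P)"

end

theory Submission
  imports Defs "HOL-Library.FuncSet"
begin

lemma homog_nontriv:
  fixes a :: "'i \<Rightarrow> 'e \<Rightarrow> 'f::field"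
  assumes "finite M" "finite I" "card M < card I"
  shows "\<exists>c. (\<exists>i\<in>I. c i \<noteq> 0) \<and> (\<forall>e\<in>M. (\<Sum>i\<in>I. c i * a i e) = 0)"
  using assms
proof (induction M arbitrary: I a rule: finite_induct)
  case empty
  then obtain i where "i \<in> I" by fastforce
  then show ?case by (intro exI[of _ "\<lambda>_. 1"]) auto
next
  case (insert e0 M)
  show ?case
  proof (cases "\<forall>i\<in>I. a i e0 = 0")
    case True
    from insert have "card M < card I" by simp
    from insert.IH[OF insert.prems(1) this] obtain c where
      c: "(\<exists>i\<in>I. c i \<noteq> 0)" "\<forall>e\<in>M. (\<Sum>i\<in>I. c i * a i e) = 0" by blast
    show ?thesis using c True by (intro exI[of _ c]) auto
  next
    case False
    then obtain i0 where i0: "i0 \<in> I" "a i0 e0 \<noteq> 0" by blast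
    define a' where "a' = (\<lambda>i e. a i e - a i e0 / a i0 e0 * a i0 e)"
    have fin': "finite (I - {i0})" using insert by simp
    have "card M < card (I - {i0})" using insert i0 by (simp add: card_Diff_singleton)
    from insert.IH[OF fin' this, of a'] obtain c' where
      c': "(\<exists>i\<in>I - {i0}. c' i \<noteq> 0)" "\<forall>e\<in>M. (\<Sum>i\<in>I - {i0}. c' i * a' i e) = 0" by blast
    define c where "c = c'(i0 := - (\<Sum>i\<in>I - {i0}. c' i * a i e0) / a i0 e0)"
    have split: "(\<Sum>i\<in>I. c i * a i e) = c i0 * a i0 e + (\<Sum>i\<in>I - {i0}. c' i * a i e)" for e
    proof -
      have "(\<Sum>i\<in>I. c i * a i e) = c i0 * a i0 e + (\<Sum>i\<in>I - {i0}. c i * a i e)"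
        using i0 insert.prems(1) by (simp add: sum.remove)
      also have "(\<Sum>i\<in>I - {i0}. c i * a i e) = (\<Sum>i\<in>I - {i0}. c' i * a i e)"
        by (rule sum.cong) (auto simp: c_def)
      finally show ?thesis .
    qed
    have "\<forall>e\<in>insert e0 M. (\<Sum>i\<in>I. c i * a i e) = 0"
    proof
      fix e assume e: "e \<in> insert e0 M"
      show "(\<Sum>i\<in>I. c i * a i e) = 0"
      proof (cases "e = e0")
        case True
        then show ?thesis using i0 by (simp only: split) (simp add: c_def)
      next
        case False
        then have eM: "e \<in> M" using e by simp
        have "(\<Sum>i\<in>I - {i0}. c' i * a' i e) = (\<Sum>i\<in>I - {i0}. c' i * a i e)
              - (\<Sum>i\<in>I - {i0}. c' i * a i e0) / a i0 e0 * a i0 e"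
          by (simp add: a'_def algebra_simps sum_subtractf sum_distrib_left sum_divide_distrib sum_distrib_right)
        then show ?thesis using c'(2) eM by (simp only: split) (simp add: c_def algebra_simps)
      qed
    qed
    moreover have "\<exists>i\<in>I. c i \<noteq> 0" using c'(1) by (auto simp: c_def)
    ultimately show ?thesis by blast
  qed
qed

definition subfield :: "real set \<Rightarrow> bool" where
  "subfield F \<longleftrightarrow> 0 \<in> F \<and> 1 \<in> F \<and> (\<forall>x\<in>F. \<forall>y\<in>F. x + y \<in> F \<and> - x \<in> F \<and> x * y \<in> F) \<and>
      (\<forall>x\<in>F. x \<noteq> 0 \<longrightarrow> inverse x \<in> F)"

lemma gen_field_eq: "gen_field S = \<Inter>{F. S \<subseteq> F \<and> subfield F}"
  unfolding gen_field_def subfield_def by simp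

lemma subfield_gen_field: "subfield (gen_field S)"
  unfolding gen_field_eq subfield_def by blast

lemma gen_field_sub: "S \<subseteq> gen_field S"
  unfolding gen_field_eq by blast

lemma gen_field_least: "S \<subseteq> F \<Longrightarrow> subfield F \<Longrightarrow> gen_field S \<subseteq> F"
  unfolding gen_field_eq by blast

context fixes F assumes sf: "subfield F"
begin
lemma sf0: "0 \<in> F" using sf by (simp add: subfield_def)
lemma sf1: "1 \<in> F" using sf by (simp add: subfield_def)
lemma sfadd: "x \<in> F \<Longrightarrow> y \<in> F \<Longrightarrow> x + y \<in> F" using sf by (simp add: subfield_def)
lemma sfmult: "x \<in> F \<Longrightarrow> y \<in> F \<Longrightarrow> x * y \<in> F" using sf by (simp add: subfield_def)
lemma sfuminus: "x \<in> F \<Longrightarrow> - x \<in> F" using sf by (simp add: subfield_def)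
lemma sfinv: "x \<in> F \<Longrightarrow> inverse x \<in> F"
  using sf by (cases "x = 0") (auto simp: subfield_def)
lemma sfdiff: "x \<in> F \<Longrightarrow> y \<in> F \<Longrightarrow> x - y \<in> F"
  using sfadd[of x "-y"] sfuminus[of y] by simp
lemma sfdiv: "x \<in> F \<Longrightarrow> y \<in> F \<Longrightarrow> x / y \<in> F"
  using sfmult[of x "inverse y"] sfinv[of y] by (simp add: divide_inverse)
lemma sfsum: "(\<And>x. x \<in> A \<Longrightarrow> f x \<in> F) \<Longrightarrow> sum f A \<in> F"
proof (induction A rule: infinite_finite_induct)
  case (insert x A) then show ?case by (simp add: sfadd)
qed (auto simp: sf0)
end

definition lsol :: "'j set \<Rightarrow> (('j \<Rightarrow> real) \<times> real) set \<Rightarrow> ('j \<Rightarrow> real) set" where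
  "lsol J E = {x. \<forall>(a,b)\<in>E. (\<Sum>j\<in>J. a j * x j) = b}"

lemma unique_sol_in_field:
  assumes sf: "subfield K" and "finite J"
    and coef: "\<forall>(a,b)\<in>E. (\<forall>j\<in>J. a j \<in> K) \<and> b \<in> K"
    and x0: "x0 \<in> lsol J E"
    and uniq: "\<forall>x\<in>lsol J E. \<forall>j\<in>J. x j = x0 j"
  shows "\<forall>j\<in>J. x0 j \<in> K"
  using \<open>finite J\<close> coef x0 uniq
proof (induction J arbitrary: E rule: finite_induct)
  case empty then show ?case by simp
next
  case (insert j0 J E)
  show ?case
  proof (cases "\<exists>(a,b)\<in>E. a j0 \<noteq> 0")
    case False
    define x1 where "x1 = x0(j0 := x0 j0 + 1)"
    have "x1 \<in> lsol (insert j0 J) E"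
    proof -
      { fix a b assume ab: "(a,b) \<in> E"
        then have "a j0 = 0" using False by auto
        have "(\<Sum>j\<in>insert j0 J. a j * x1 j) = (\<Sum>j\<in>insert j0 J. a j * x0 j)"
          using insert.hyps \<open>a j0 = 0\<close> by (simp add: x1_def) (rule sum.cong, auto)
        also have "\<dots> = b" using insert.prems(2) ab by (auto simp: lsol_def)
        finally have "(\<Sum>j\<in>insert j0 J. a j * x1 j) = b" . }
      then show ?thesis by (auto simp: lsol_def)
    qed
    then have "x1 j0 = x0 j0" using insert.prems(3) by blast
    then show ?thesis by (simp add: x1_def)
  next
    case True
    then obtain a0 b0 where ab0: "(a0,b0) \<in> E" "a0 j0 \<noteq> 0" by blast
    define f where "f = (\<lambda>(a::'a\<Rightarrow>real,b::real). (\<lambda>j. a j - a j0 / a0 j0 * a0 j, b - a j0 / a0 j0 * b0))"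
    define E' where "E' = f ` E"
    have sumeq: "(\<Sum>j\<in>J. (a j - r * a0 j) * x j) = (\<Sum>j\<in>insert j0 J. a j * x j) - r * (\<Sum>j\<in>insert j0 J. a0 j * x j)"
      if "r = a j0 / a0 j0" for a r and x :: "'a \<Rightarrow> real"
      using insert.hyps that ab0(2)
      by (simp add: algebra_simps sum_subtractf sum_distrib_left)
    have coef': "\<forall>(a,b)\<in>E'. (\<forall>j\<in>J. a j \<in> K) \<and> b \<in> K"
    proof -
      have "(\<forall>j\<in>J. a j - a j0 / a0 j0 * a0 j \<in> K) \<and> b - a j0 / a0 j0 * b0 \<in> K" if ab: "(a,b) \<in> E" for a b
      proof -
        have c0: "\<forall>j\<in>insert j0 J. a0 j \<in> K" "b0 \<in> K" using insert.prems(1) ab0 by auto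
        have c1: "\<forall>j\<in>insert j0 J. a j \<in> K" "b \<in> K" using insert.prems(1) ab by auto
        show ?thesis
          using c0 c1 by (auto intro!: sfdiff[OF sf] sfmult[OF sf] sfdiv[OF sf])
      qed
      then show ?thesis by (auto simp: E'_def f_def)
    qed
    have x0': "x0 \<in> lsol J E'"
    proof -
      { fix a b assume ab: "(a,b) \<in> E"
        have "(\<Sum>j\<in>J. (a j - a j0 / a0 j0 * a0 j) * x0 j) = b - a j0 / a0 j0 * b0"
        proof -
          have "(\<Sum>j\<in>insert j0 J. a j * x0 j) = b" "(\<Sum>j\<in>insert j0 J. a0 j * x0 j) = b0"
            using insert.prems(2) ab ab0 by (auto simp: lsol_def)
          then show ?thesis using sumeq[of "a j0 / a0 j0" a x0] by simp
        qed }
      then show ?thesis by (auto simp: lsol_def E'_def f_def)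
    qed
    have uniq': "\<forall>x\<in>lsol J E'. \<forall>j\<in>J. x j = x0 j"
    proof (intro ballI)
      fix x j assume x: "x \<in> lsol J E'" and j: "j \<in> J"
      define x' where "x' = x(j0 := (b0 - (\<Sum>j\<in>J. a0 j * x j)) / a0 j0)"
      have sJ: "(\<Sum>j\<in>J. c j * x' j) = (\<Sum>j\<in>J. c j * x j)" for c
        using insert.hyps by (intro sum.cong) (auto simp: x'_def)
      have e0: "(\<Sum>j\<in>insert j0 J. a0 j * x' j) = b0"
        using insert.hyps ab0(2) sJ[of a0] by (simp add: x'_def field_simps)
      have "x' \<in> lsol (insert j0 J) E"
      proof -
        { fix a b assume ab: "(a,b) \<in> E"
          have h: "(\<Sum>j\<in>J. (a j - a j0 / a0 j0 * a0 j) * x j) = b - a j0 / a0 j0 * b0"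
            using x ab by (force simp: lsol_def E'_def f_def)
          have "(\<Sum>j\<in>J. (a j - a j0 / a0 j0 * a0 j) * x' j) = (\<Sum>j\<in>J. (a j - a j0 / a0 j0 * a0 j) * x j)"
            by (rule sJ)
          then have "(\<Sum>j\<in>insert j0 J. a j * x' j) - a j0 / a0 j0 * b0 = b - a j0 / a0 j0 * b0"
            using sumeq[of "a j0 / a0 j0" a x'] h e0 by simp
          then have "(\<Sum>j\<in>insert j0 J. a j * x' j) = b" by simp }
        then show ?thesis by (auto simp: lsol_def)
      qed
      then have "x' j = x0 j" using insert.prems(3) j by blast
      then show "x j = x0 j" using j insert.hyps by (simp add: x'_def split: if_splits)
    qed
    have IH: "\<forall>j\<in>J. x0 j \<in> K" using insert.IH[OF coef' x0' uniq'] .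
    have "a0 j0 * x0 j0 + (\<Sum>j\<in>J. a0 j * x0 j) = b0"
      using insert.prems(2) ab0 insert.hyps by (auto simp: lsol_def)
    then have "x0 j0 = (b0 - (\<Sum>j\<in>J. a0 j * x0 j)) / a0 j0" using ab0(2) by (simp add: field_simps)
    moreover have "b0 \<in> K" "a0 j0 \<in> K" "\<forall>j\<in>J. a0 j \<in> K" using insert.prems(1) ab0 by auto
    ultimately have "x0 j0 \<in> K" using IH
      by (auto intro!: sfdiv[OF sf] sfdiff[OF sf] sfsum[OF sf] sfmult[OF sf])
    with IH show ?thesis by simp
  qed
qed

definition Fset :: "real set \<Rightarrow> nat \<Rightarrow> (real \<Rightarrow> nat) set" where
  "Fset A D = {e. (\<forall>x. x \<notin> A \<longrightarrow> e x = 0) \<and> (\<forall>a\<in>A. e a \<le> D)}"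

lemma Fset_bij: "bij_betw (\<lambda>e. restrict e A) (Fset A D) (PiE A (\<lambda>_. {..D}))"
proof (rule bij_betw_byWitness[where f' = "\<lambda>f x. if x \<in> A then f x else 0"])
  show "\<forall>a\<in>Fset A D. (\<lambda>x. if x \<in> A then restrict a A x else 0) = a"
    by (auto simp: Fset_def fun_eq_iff)
  show "\<forall>a'\<in>PiE A (\<lambda>_. {..D}). restrict (\<lambda>x. if x \<in> A then a' x else 0) A = a'"
    by (auto simp: fun_eq_iff PiE_def extensional_def)
  show "(\<lambda>e. restrict e A) ` Fset A D \<subseteq> PiE A (\<lambda>_. {..D})"
    by (auto simp: Fset_def)
  show "(\<lambda>f x. if x \<in> A then f x else 0) ` PiE A (\<lambda>_. {..D}) \<subseteq> Fset A D"
    by (auto simp: Fset_def)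
qed

lemma finite_Fset: "finite A \<Longrightarrow> finite (Fset A D)"
  using bij_betw_finite[OF Fset_bij] by (simp add: finite_PiE)

lemma card_Fset: "finite A \<Longrightarrow> card (Fset A D) = (D+1) ^ card A"
  using bij_betw_same_card[OF Fset_bij] by (simp add: card_PiE)

definition monom :: "real set \<Rightarrow> (real \<Rightarrow> nat) \<Rightarrow> real" where
  "monom A e = (\<Prod>t\<in>A. t ^ e t)"

definition pv :: "real set \<Rightarrow> nat \<Rightarrow> real set" where
  "pv A D = {x. \<exists>c. x = (\<Sum>e\<in>Fset A D. of_rat (c e) * monom A e)}"

context fixes A :: "real set" assumes finA: "finite A"
begin

lemma Fset_mono: "D \<le> D' \<Longrightarrow> Fset A D \<subseteq> Fset A D'"
  by (auto simp: Fset_def)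

lemma pv_mono: assumes "D \<le> D'" shows "pv A D \<subseteq> pv A D'"
proof
  fix x assume "x \<in> pv A D"
  then obtain c where x: "x = (\<Sum>e\<in>Fset A D. of_rat (c e) * monom A e)" by (auto simp: pv_def)
  define c' where "c' e = (if e \<in> Fset A D then c e else 0)" for e
  have "(\<Sum>e\<in>Fset A D'. of_rat (c' e) * monom A e) = (\<Sum>e\<in>Fset A D. of_rat (c' e) * monom A e)"
    by (rule sum.mono_neutral_right) (auto simp: finite_Fset[OF finA] Fset_mono[OF assms] c'_def)
  also have "\<dots> = x" unfolding x by (rule sum.cong) (auto simp: c'_def)
  finally show "x \<in> pv A D'" by (auto simp: pv_def)
qed

lemma pv_add: "x \<in> pv A D \<Longrightarrow> y \<in> pv A D \<Longrightarrow> x + y \<in> pv A D"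
proof -
  assume "x \<in> pv A D" "y \<in> pv A D"
  then obtain c d where "x = (\<Sum>e\<in>Fset A D. of_rat (c e) * monom A e)" "y = (\<Sum>e\<in>Fset A D. of_rat (d e) * monom A e)"
    by (auto simp: pv_def)
  then have "x + y = (\<Sum>e\<in>Fset A D. of_rat (c e + d e) * monom A e)"
    by (simp add: sum.distrib of_rat_add algebra_simps)
  then show ?thesis by (auto simp: pv_def)
qed

lemma pv_neg: "x \<in> pv A D \<Longrightarrow> - x \<in> pv A D"
proof -
  assume "x \<in> pv A D"
  then obtain c where "x = (\<Sum>e\<in>Fset A D. of_rat (c e) * monom A e)" by (auto simp: pv_def)
  then have "- x = (\<Sum>e\<in>Fset A D. of_rat (- c e) * monom A e)"
    by (simp add: sum_negf of_rat_minus)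
  then show ?thesis by (auto simp: pv_def)
qed

lemma pv_rat: "of_rat q \<in> pv A D"
proof -
  have z: "(\<lambda>_. 0) \<in> Fset A D" by (auto simp: Fset_def)
  have "(\<Sum>e\<in>Fset A D. of_rat (if e = (\<lambda>_. 0) then q else 0) * monom A e) = (\<Sum>e\<in>Fset A D. if e = (\<lambda>_. 0) then of_rat q * monom A e else 0)"
    by (rule sum.cong) auto
  also have "\<dots> = of_rat q * monom A (\<lambda>_. 0)"
    using z finite_Fset[OF finA] by (simp add: sum.delta')
  also have "monom A (\<lambda>_. 0) = 1" by (simp add: monom_def)
  finally show ?thesis unfolding pv_def by (intro CollectI exI[of _ "\<lambda>e. if e = (\<lambda>_. 0) then q else 0"]) simp
qed

lemma pv_var: assumes "t \<in> A" "1 \<le> D" shows "t \<in> pv A D"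
proof -
  define e1 where "e1 = (\<lambda>x. if x = t then 1 else (0::nat))"
  have z: "e1 \<in> Fset A D" using assms by (auto simp: Fset_def e1_def)
  have "monom A e1 = t"
  proof -
    have "monom A e1 = (\<Prod>x\<in>A. if x = t then t else 1)"
      unfolding monom_def by (rule prod.cong) (auto simp: e1_def)
    also have "\<dots> = t" using assms finA by (simp add: prod.delta)
    finally show ?thesis .
  qed
  moreover have "(\<Sum>e\<in>Fset A D. of_rat (if e = e1 then 1 else 0) * monom A e) = (\<Sum>e\<in>Fset A D. if e = e1 then monom A e else 0)"
    by (rule sum.cong) auto
  moreover have "\<dots> = monom A e1"
    using z finite_Fset[OF finA] by (simp add: sum.delta')
  ultimately show ?thesis unfolding pv_def by (intro CollectI exI[of _ "\<lambda>e. if e = e1 then 1 else 0"]) simp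
qed

lemma monom_add: "monom A (\<lambda>x. e1 x + e2 x) = monom A e1 * monom A e2"
  by (simp add: monom_def power_add prod.distrib)

lemma pv_mult: assumes "x \<in> pv A D1" "y \<in> pv A D2" shows "x * y \<in> pv A (D1 + D2)"
proof -
  obtain c d where x: "x = (\<Sum>e\<in>Fset A D1. of_rat (c e) * monom A e)" and y: "y = (\<Sum>e\<in>Fset A D2. of_rat (d e) * monom A e)"
    using assms by (auto simp: pv_def)
  define g where "g = (\<lambda>(e1::real\<Rightarrow>nat, e2::real\<Rightarrow>nat). (\<lambda>x. e1 x + e2 x))"
  define h where "h = (\<lambda>(e1, e2). of_rat (c e1 * d e2) * monom A (g (e1, e2)))"
  define X where "X = Fset A D1 \<times> Fset A D2"
  have finX: "finite X" using finite_Fset[OF finA] by (simp add: X_def)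
  have "x * y = (\<Sum>p\<in>X. h p)"
    unfolding x y X_def sum_product sum.cartesian_product h_def g_def
    by (rule sum.cong) (auto simp: monom_add of_rat_mult)
  also have "\<dots> = (\<Sum>e\<in>Fset A (D1+D2). sum h {p \<in> X. g p = e})"
    by (rule sum.group[symmetric]) (use finX finite_Fset[OF finA] in \<open>auto simp: X_def g_def Fset_def add_mono\<close>)
  also have "\<dots> = (\<Sum>e\<in>Fset A (D1+D2). of_rat (\<Sum>p\<in>{p \<in> X. g p = e}. c (fst p) * d (snd p)) * monom A e)"
    by (rule sum.cong) (auto simp: h_def of_rat_sum sum_distrib_right split: prod.splits intro!: sum.cong)
  finally show ?thesis by (auto simp: pv_def)
qed

lemma pv_pow: "x \<in> pv A D \<Longrightarrow> x ^ n \<in> pv A (D * n)"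
proof (induction n)
  case 0 then show ?case using pv_rat[of 1 0] by simp
next
  case (Suc n)
  then have "x * x ^ n \<in> pv A (D + D * n)" by (intro pv_mult) auto
  then show ?case by simp
qed

lemma pv_prod: "finite I \<Longrightarrow> (\<And>i. i \<in> I \<Longrightarrow> f i \<in> pv A (d i)) \<Longrightarrow> prod f I \<in> pv A (sum d I)"
proof (induction I rule: finite_induct)
  case empty then show ?case using pv_rat[of 1 0] by simp
next
  case (insert i I) then show ?case by (simp add: pv_mult)
qed

lemma pv_dep:
  assumes "finite I" "card (Fset A D) < card I" "\<And>i. i \<in> I \<Longrightarrow> g i \<in> pv A D"
  shows "\<exists>c. (\<exists>i\<in>I. c i \<noteq> 0) \<and> (\<Sum>i\<in>I. of_rat (c i) * g i) = 0"
proof -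
  have "\<forall>i\<in>I. \<exists>a. g i = (\<Sum>e\<in>Fset A D. of_rat (a e) * monom A e)" using assms(3) by (auto simp: pv_def)
  then obtain a where a: "\<And>i. i \<in> I \<Longrightarrow> g i = (\<Sum>e\<in>Fset A D. of_rat (a i e) * monom A e)" by metis
  obtain c where c: "\<exists>i\<in>I. c i \<noteq> 0" "\<forall>e\<in>Fset A D. (\<Sum>i\<in>I. c i * a i e) = 0"
    using homog_nontriv[OF finite_Fset[OF finA] assms(1,2), of a] by blast
  have "(\<Sum>i\<in>I. of_rat (c i) * g i) = (\<Sum>i\<in>I. \<Sum>e\<in>Fset A D. of_rat (c i * a i e) * monom A e)"
    by (rule sum.cong) (auto simp: a sum_distrib_left of_rat_mult algebra_simps)
  also have "\<dots> = (\<Sum>e\<in>Fset A D. of_rat (\<Sum>i\<in>I. c i * a i e) * monom A e)"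
    by (subst sum.swap) (simp add: of_rat_sum sum_distrib_right)
  also have "\<dots> = 0" using c(2) by simp
  finally show ?thesis using c(1) by blast
qed

end

definition Rf :: "real set \<Rightarrow> real set" where
  "Rf A = {x. \<exists>D a b. a \<in> pv A D \<and> b \<in> pv A D \<and> b \<noteq> 0 \<and> x = a / b}"


lemma subfield_Rf: assumes finA: "finite A" shows "subfield (Rf A)"
proof -
  have pv1: "1 \<in> pv A D" for D using pv_rat[OF finA, of 1] by simp
  have pv0: "0 \<in> pv A D" for D using pv_rat[OF finA, of 0] by simp
  have up: "x \<in> pv A D \<Longrightarrow> x \<in> pv A (D + D')" "x \<in> pv A D' \<Longrightarrow> x \<in> pv A (D + D')" for x D D'
    using pv_mono[OF finA, of D "D+D'"] pv_mono[OF finA, of D' "D+D'"] by auto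
  have "0 \<in> Rf A" unfolding Rf_def using pv0 pv1 by force
  moreover have "1 \<in> Rf A" unfolding Rf_def using pv1 by force
  moreover have "x + y \<in> Rf A \<and> - x \<in> Rf A \<and> x * y \<in> Rf A" if xR: "x \<in> Rf A" and yR: "y \<in> Rf A" for x y
  proof -
    obtain D a b where x: "a \<in> pv A D" "b \<in> pv A D" "b \<noteq> 0" "x = a / b" using xR unfolding Rf_def by blast
    obtain D' c d where y: "c \<in> pv A D'" "d \<in> pv A D'" "d \<noteq> 0" "y = c / d" using yR unfolding Rf_def by blast
    have "x + y = (a * d + b * c) / (b * d)" using x y by (simp add: field_simps)
    moreover have "a * d + b * c \<in> pv A (D + D')" "b * d \<in> pv A (D + D')"
      using x y by (auto intro!: pv_add[OF finA] pv_mult[OF finA])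
    ultimately have 1: "x + y \<in> Rf A" using x y unfolding Rf_def by (intro CollectI exI conjI) auto
    have 2: "- x \<in> Rf A" using x pv_neg[OF finA, of a D] unfolding Rf_def by (intro CollectI exI[of _ D] exI[of _ "-a"] exI[of _ b]) auto
    have "x * y = (a * c) / (b * d)" using x y by simp
    moreover have "a * c \<in> pv A (D + D')" "b * d \<in> pv A (D + D')"
      using x y by (auto intro!: pv_mult[OF finA])
    ultimately have 3: "x * y \<in> Rf A" using x y unfolding Rf_def by (intro CollectI exI conjI) auto
    show ?thesis using 1 2 3 by blast
  qed
  moreover have "inverse x \<in> Rf A" if xR: "x \<in> Rf A" and xnz: "x \<noteq> 0" for x
  proof -
    obtain D a b where x: "a \<in> pv A D" "b \<in> pv A D" "b \<noteq> 0" "x = a / b" using xR unfolding Rf_def by blast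
    then have "a \<noteq> 0" using xnz by auto
    then show ?thesis using x unfolding Rf_def by (intro CollectI exI[of _ D] exI[of _ b] exI[of _ a]) auto
  qed
  ultimately show ?thesis unfolding subfield_def by blast
qed

lemma sub_Rf: assumes "finite A" shows "A \<subseteq> Rf A"
proof
  fix t assume "t \<in> A"
  then have "t \<in> pv A 1" "1 \<in> pv A 1" using pv_var[OF assms] pv_rat[OF assms, of 1] by auto
  then show "t \<in> Rf A" unfolding Rf_def by (intro CollectI exI[of _ 1] exI[of _ t] exI[of _ 1]) auto
qed

lemma gen_field_Rf: "finite A \<Longrightarrow> gen_field A \<subseteq> Rf A"
  by (intro gen_field_least sub_Rf subfield_Rf)

lemma count_ineq:
  fixes C m p :: nat
  assumes "m < p"
  shows "(C * ((C+1)^m) + 1) ^ m < ((C+1)^m + 1) ^ p"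
proof -
  define Dd where "Dd = (C+1)^m"
  have "C * Dd + 1 \<le> (C+1) * (Dd+1)" by (simp add: algebra_simps)
  then have "(C * Dd + 1) ^ m \<le> ((C+1) * (Dd+1)) ^ m" by (rule power_mono) simp
  also have "\<dots> = (C+1)^m * (Dd+1)^m" by (rule power_mult_distrib)
  also have "\<dots> = Dd * (Dd+1)^m" by (simp only: Dd_def[symmetric])
  also have "\<dots> < (Dd+1) * (Dd+1)^m" by simp
  also have "\<dots> = (Dd+1)^(Suc m)" by simp
  also have "\<dots> \<le> (Dd+1)^p" using assms by (intro power_increasing) auto
  finally show ?thesis by (simp add: Dd_def)
qed

lemma trans_bound:
  assumes finT: "finite T" and SK: "S \<subseteq> gen_field T" and ind: "alg_indep_rat S"
  shows "card S \<le> card T"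
proof (rule ccontr)
  assume "\<not> card S \<le> card T"
  then have mp: "card T < card S" by simp
  define m where "m = card T"
  define p where "p = card S"
  have finS: "finite S" using ind by (simp add: alg_indep_rat_def)
  have SR: "S \<subseteq> Rf T" using SK gen_field_Rf[OF finT] by blast
  then have "\<forall>s\<in>S. \<exists>D a b. a \<in> pv T D \<and> b \<in> pv T D \<and> b \<noteq> 0 \<and> s = a / b" unfolding Rf_def by blast
  then obtain Ds a b where ab: "\<And>s. s \<in> S \<Longrightarrow> a s \<in> pv T (Ds s) \<and> b s \<in> pv T (Ds s) \<and> b s \<noteq> 0 \<and> s = a s / b s"
    by metis
  define D0 where "D0 = sum Ds S"
  have ab0: "a s \<in> pv T D0" "b s \<in> pv T D0" if "s \<in> S" for s
    using ab[OF that] pv_mono[OF finT, of "Ds s" D0] member_le_sum[OF that, of Ds, OF _ finS]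
    by (auto simp: D0_def)
  define bb where "bb = (\<Prod>s\<in>S. b s)"
  define c0 where "c0 = p * D0"
  have bbpv: "bb \<in> pv T c0"
    using pv_prod[OF finT finS, of b "\<lambda>_. D0"] ab0 by (simp add: bb_def c0_def p_def)
  have bbnz: "bb \<noteq> 0" using ab finS by (simp add: bb_def)
  define a' where "a' s = a s * (\<Prod>s'\<in>S - {s}. b s')" for s
  have a'pv: "a' s \<in> pv T c0" if "s \<in> S" for s
  proof -
    have "(\<Prod>s'\<in>S - {s}. b s') \<in> pv T (\<Sum>s'\<in>S - {s}. D0)"
      using pv_prod[OF finT, of "S - {s}" b "\<lambda>_. D0"] finS ab0 by auto
    then have "a' s \<in> pv T (D0 + (\<Sum>s'\<in>S - {s}. D0))"
      unfolding a'_def using ab0[OF that] by (intro pv_mult[OF finT])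
    moreover have "D0 + (\<Sum>s'\<in>S - {s}. D0) = c0"
      using that finS by (simp add: c0_def p_def card_Diff_singleton) (metis card_gt_0_iff empty_iff mult_Suc Suc_pred)
    ultimately show ?thesis by simp
  qed
  have sdiv: "s = a' s / bb" if "s \<in> S" for s
  proof -
    have "bb = b s * (\<Prod>s'\<in>S - {s}. b s')" using that finS by (simp add: bb_def prod.remove)
    moreover have "(\<Prod>s'\<in>S - {s}. b s') \<noteq> 0" using ab finS by simp
    ultimately show ?thesis using ab[OF that] by (simp add: a'_def)
  qed
  define Dd where "Dd = (c0 * p + 1) ^ m"
  define E where "E = Fset S Dd"
  define g where "g e = (\<Prod>s\<in>S. a' s ^ e s) * bb ^ (p * Dd - (\<Sum>s\<in>S. e s))" for e
  have sumE: "(\<Sum>s\<in>S. e s) \<le> p * Dd" if "e \<in> E" for e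
  proof -
    have "(\<Sum>s\<in>S. e s) \<le> (\<Sum>s\<in>S. Dd)" using that by (intro sum_mono) (auto simp: E_def Fset_def)
    then show ?thesis by (simp add: p_def)
  qed
  have gpv: "g e \<in> pv T (c0 * p * Dd)" if "e \<in> E" for e
  proof -
    have "(\<Prod>s\<in>S. a' s ^ e s) \<in> pv T (\<Sum>s\<in>S. c0 * e s)"
      using pv_prod[OF finT finS, of "\<lambda>s. a' s ^ e s" "\<lambda>s. c0 * e s"] pv_pow[OF finT a'pv] by auto
    moreover have "bb ^ (p * Dd - (\<Sum>s\<in>S. e s)) \<in> pv T (c0 * (p * Dd - (\<Sum>s\<in>S. e s)))"
      using pv_pow[OF finT bbpv] .
    ultimately have "g e \<in> pv T ((\<Sum>s\<in>S. c0 * e s) + c0 * (p * Dd - (\<Sum>s\<in>S. e s)))"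
      unfolding g_def by (rule pv_mult[OF finT])
    moreover have "(\<Sum>s\<in>S. c0 * e s) + c0 * (p * Dd - (\<Sum>s\<in>S. e s)) = c0 * p * Dd"
      using sumE[OF that] by (simp add: sum_distrib_left[symmetric] diff_mult_distrib2 algebra_simps)
    ultimately show ?thesis by simp
  qed
  have geq: "g e = bb ^ (p * Dd) * monom S e" if "e \<in> E" for e
  proof -
    have "monom S e = (\<Prod>s\<in>S. (a' s / bb) ^ e s)"
      unfolding monom_def by (rule prod.cong) (auto simp: sdiv[symmetric])
    also have "\<dots> = (\<Prod>s\<in>S. a' s ^ e s) / bb ^ (\<Sum>s\<in>S. e s)"
      by (simp add: power_divide prod_dividef power_sum)
    finally have "bb ^ (p * Dd) * monom S e = (\<Prod>s\<in>S. a' s ^ e s) * (bb ^ (p * Dd) / bb ^ (\<Sum>s\<in>S. e s))"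
      by simp
    also have "bb ^ (p * Dd) / bb ^ (\<Sum>s\<in>S. e s) = bb ^ (p * Dd - (\<Sum>s\<in>S. e s))"
      using bbnz sumE[OF that] by (simp add: power_diff)
    finally show ?thesis by (simp add: g_def)
  qed
  have cardlt: "card (Fset T (c0 * p * Dd)) < card E"
    using count_ineq[of m p "c0 * p"] mp
    by (simp add: card_Fset[OF finT] card_Fset[OF finS] E_def Dd_def m_def p_def mult.commute)
  have finE: "finite E" using finite_Fset[OF finS] by (simp add: E_def)
  have "\<exists>c. (\<exists>e\<in>E. c e \<noteq> 0) \<and> (\<Sum>e\<in>E. of_rat (c e) * g e) = 0"
    by (rule pv_dep[OF finT finE cardlt gpv])
  then obtain c where c: "\<exists>e\<in>E. c e \<noteq> 0" "(\<Sum>e\<in>E. of_rat (c e) * g e) = 0" by blast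
  have "(\<Sum>e\<in>E. of_rat (c e) * g e) = bb ^ (p * Dd) * (\<Sum>e\<in>E. of_rat (c e) * monom S e)"
    by (simp add: sum_distrib_left geq algebra_simps cong: sum.cong)
  then have z: "(\<Sum>e\<in>E. of_rat (c e) * (\<Prod>s\<in>S. s ^ e s)) = 0" using c(2) bbnz by (simp add: monom_def)
  have "finite E" "\<forall>e\<in>E. \<forall>x. x \<notin> S \<longrightarrow> e x = 0" using finite_Fset[OF finS] by (auto simp: E_def Fset_def)
  then have "\<forall>e\<in>E. c e = 0" using ind z unfolding alg_indep_rat_def by blast
  then show False using c(1) by blast
qed

definition comb :: "((nat\<Rightarrow>real) \<Rightarrow> real) \<Rightarrow> (nat\<Rightarrow>real) set \<Rightarrow> (nat \<Rightarrow> real)" where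
  "comb u V = (\<lambda>i. \<Sum>v\<in>V. u v * v i)"

lemma conv_hull_comb: "conv_hull V = {x. \<exists>u. (\<forall>v\<in>V. 0 \<le> u v) \<and> sum u V = 1 \<and> x = comb u V}"
  unfolding conv_hull_def comb_def by simp

lemma in_conv_hull: assumes "finite V" "w \<in> V" shows "w \<in> conv_hull V"
proof -
  have "comb (\<lambda>v. if v = w then 1 else 0) V = w"
  proof
    fix i
    have "comb (\<lambda>v. if v = w then 1 else 0) V i = (\<Sum>v\<in>V. if v = w then w i else 0)"
      unfolding comb_def by (rule sum.cong) auto
    also have "\<dots> = w i" using assms by (simp add: sum.delta')
    finally show "comb (\<lambda>v. if v = w then 1 else 0) V i = w i" .
  qed
  moreover have "sum (\<lambda>v. if v = w then 1 else (0::real)) V = 1" using assms by (simp add: sum.delta')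
  ultimately show ?thesis unfolding conv_hull_comb
    by (intro CollectI exI[of _ "\<lambda>v. if v = w then 1 else 0"]) auto
qed

lemma comb_in_conv_sub:
  assumes "finite W" "S \<subseteq> W" "\<forall>w\<in>S. 0 \<le> u w" "sum u S = 1"
  shows "comb u S \<in> conv_hull W"
proof -
  define u' where "u' w = (if w \<in> S then u w else 0)" for w
  have "sum u' W = sum u' S" using assms by (intro sum.mono_neutral_right) (auto simp: u'_def)
  moreover have "comb u' W = comb u' S" unfolding comb_def
    using assms by (intro ext sum.mono_neutral_right) (auto simp: u'_def)
  moreover have "comb u' S = comb u S" unfolding comb_def by (auto simp: u'_def)
  moreover have "sum u' S = sum u S" by (auto simp: u'_def)
  ultimately show ?thesis unfolding conv_hull_comb using assms by (intro CollectI exI[of _ u']) (auto simp: u'_def)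
qed

lemma conv_sub:
  assumes finU: "finite U" and finV: "finite V" and VU: "V \<subseteq> conv_hull U"
  shows "conv_hull V \<subseteq> conv_hull U"
proof
  fix x assume "x \<in> conv_hull V"
  then obtain u where u: "\<forall>v\<in>V. 0 \<le> u v" "sum u V = 1" "x = comb u V" by (auto simp: conv_hull_comb)
  have "\<forall>v\<in>V. \<exists>l. (\<forall>w\<in>U. 0 \<le> l w) \<and> sum l U = 1 \<and> v = comb l U" using VU by (auto simp: conv_hull_comb)
  then obtain l where l: "\<And>v. v \<in> V \<Longrightarrow> (\<forall>w\<in>U. 0 \<le> l v w) \<and> sum (l v) U = 1 \<and> v = comb (l v) U" by metis
  define m where "m w = (\<Sum>v\<in>V. u v * l v w)" for w
  have "\<forall>w\<in>U. 0 \<le> m w" using u l by (auto simp: m_def intro!: sum_nonneg)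
  moreover have "sum m U = 1"
  proof -
    have "sum m U = (\<Sum>v\<in>V. u v * sum (l v) U)" unfolding m_def
      by (subst sum.swap) (simp add: sum_distrib_left)
    also have "\<dots> = sum u V" using l by simp
    finally show ?thesis using u by simp
  qed
  moreover have "x = comb m U"
  proof
    fix i
    have "x i = (\<Sum>v\<in>V. u v * comb (l v) U i)" using u(3) l by (auto simp: comb_def intro!: sum.cong)
    also have "\<dots> = comb m U i" unfolding comb_def m_def
      by (simp add: sum_distrib_left sum_distrib_right mult.assoc) (rule sum.swap)
    finally show "x i = comb m U i" .
  qed
  ultimately show "x \<in> conv_hull U" by (auto simp: conv_hull_comb)
qed

lemma vertex_def2: "v \<in> vertices P \<longleftrightarrow> v \<in> P \<and> \<not> (\<exists>a\<in>P. \<exists>b\<in>P. a \<noteq> b \<and>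
       (\<exists>t::real. 0 < t \<and> t < 1 \<and> v = (\<lambda>i. (1 - t) * a i + t * b i)))"
  by (simp add: vertices_def)

lemma sum_one_single:
  fixes u :: "'a \<Rightarrow> real"
  assumes "finite V" "\<forall>v\<in>V. 0 \<le> u v" "sum u V = 1" "w \<in> V" "u w = 1"
  shows "\<forall>v\<in>V - {w}. u v = 0"
proof -
  have "sum u V = u w + sum u (V - {w})" using assms by (simp add: sum.remove)
  then have "sum u (V - {w}) = 0" using assms by simp
  then show ?thesis using assms by (subst (asm) sum_nonneg_eq_0_iff) auto
qed

lemma comb_single:
  assumes "finite V" "\<forall>v\<in>V. 0 \<le> u v" "sum u V = 1" "w \<in> V" "u w = 1"
  shows "comb u V = w"
proof
  fix i
  have "comb u V i = u w * w i + (\<Sum>v\<in>V - {w}. u v * v i)" using assms by (simp add: comb_def sum.remove)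
  also have "(\<Sum>v\<in>V - {w}. u v * v i) = 0" using sum_one_single[of V u w] assms by simp
  finally show "comb u V i = w i" using assms by simp
qed

lemma vert_sub: assumes "finite V" shows "vertices (conv_hull V) \<subseteq> V"
proof
  fix x assume xv: "x \<in> vertices (conv_hull V)"
  then obtain u where u: "\<forall>v\<in>V. 0 \<le> u v" "sum u V = 1" "x = comb u V" by (auto simp: vertices_def conv_hull_comb)
  show "x \<in> V"
  proof (rule ccontr)
    assume xV: "x \<notin> V"
    from u(2) obtain w where w: "w \<in> V" "u w \<noteq> 0" by (metis sum.neutral zero_neq_one)
    then have uw: "0 < u w" using u by force
    have "u w \<noteq> 1" using comb_single[OF assms u(1,2) w(1)] u(3) xV w by auto
    moreover have "u w \<le> 1"
      using member_le_sum[of w V u] assms u w by auto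
    ultimately have uw1: "u w < 1" by simp
    define t where "t = 1 - u w"
    define u' where "u' v = (if v = w then 0 else u v / t)" for v
    have t: "0 < t" "t < 1" using uw uw1 by (auto simp: t_def)
    have sV: "sum u V = u w + sum u (V - {w})" using assms w by (simp add: sum.remove)
    have su': "sum u' V = 1"
    proof -
      have "sum u' V = u' w + sum u' (V - {w})" using assms w by (simp add: sum.remove)
      also have "sum u' (V - {w}) = sum u (V - {w}) / t" by (simp add: u'_def sum_divide_distrib)
      finally show ?thesis using sV u(2) t by (simp add: u'_def t_def)
    qed
    define z where "z = comb u' V"
    have zc: "z \<in> conv_hull V" unfolding conv_hull_comb z_def
      by (rule CollectI, rule exI[of _ u']) (use t su' u in \<open>auto simp: u'_def\<close>)
    have wc: "w \<in> conv_hull V" using in_conv_hull[OF assms w(1)] .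
    have xeq: "x = (\<lambda>i. (1 - t) * w i + t * z i)"
    proof
      fix i
      have "comb u V i = u w * w i + (\<Sum>v\<in>V - {w}. u v * v i)" using assms w by (simp add: comb_def sum.remove)
      moreover have "z i = (\<Sum>v\<in>V - {w}. u v * v i) / t"
        using assms w by (simp add: z_def comb_def sum.remove u'_def sum_divide_distrib)
      ultimately show "x i = (1 - t) * w i + t * z i" using t u(3) by (simp add: t_def)
    qed
    have "w \<noteq> z" using xeq xV w(1) by (auto simp: algebra_simps)
    then show False using xv xeq zc wc t unfolding vertices_def by blast
  qed
qed

lemma nonvert_remove:
  assumes finV: "finite V" and w: "w \<in> V" and nv: "w \<notin> vertices (conv_hull V)"
  shows "w \<in> conv_hull (V - {w})"
proof -
  have "w \<in> conv_hull V" by (rule in_conv_hull[OF finV w])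
  with nv obtain a b t where ab: "a \<in> conv_hull V" "b \<in> conv_hull V" "a \<noteq> b" "0 < t" "t < 1"
     "w = (\<lambda>i. (1 - t) * a i + t * b i)" unfolding vertices_def by blast
  obtain \<alpha> where al: "\<forall>v\<in>V. 0 \<le> \<alpha> v" "sum \<alpha> V = 1" "a = comb \<alpha> V" using ab(1) by (auto simp: conv_hull_comb)
  obtain \<beta> where be: "\<forall>v\<in>V. 0 \<le> \<beta> v" "sum \<beta> V = 1" "b = comb \<beta> V" using ab(2) by (auto simp: conv_hull_comb)
  define l where "l v = (1 - t) * \<alpha> v + t * \<beta> v" for v
  have lnn: "\<forall>v\<in>V. 0 \<le> l v" using al be ab by (auto simp: l_def)
  have ls: "sum l V = 1" using al be by (simp add: l_def sum.distrib sum_distrib_left[symmetric])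
  have wl: "w = comb l V"
  proof
    fix i
    have "comb l V i = (1-t) * comb \<alpha> V i + t * comb \<beta> V i"
      by (simp add: comb_def l_def distrib_right sum.distrib sum_distrib_left mult.assoc)
    then show "w i = comb l V i" using ab(6) al(3) be(3) by simp
  qed
  have aw: "\<alpha> w \<le> 1" "\<beta> w \<le> 1"
    using member_le_sum[of w V \<alpha>] member_le_sum[of w V \<beta>] finV w al(1,2) be(1,2) by auto
  have "l w \<noteq> 1"
  proof
    assume "l w = 1"
    then have "\<alpha> w = 1 \<and> \<beta> w = 1" using aw ab(4,5) unfolding l_def
      by (smt (verit, best) mult_le_cancel_left1 mult_left_le)
    then have "a = w" "b = w" using comb_single[OF finV al(1,2) w] comb_single[OF finV be(1,2) w] al(3) be(3) by auto
    then show False using ab(3) by simp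
  qed
  moreover have "l w \<le> 1" using member_le_sum[of w V l] finV w lnn ls by auto
  ultimately have lw: "l w < 1" by simp
  define l' where "l' v = l v / (1 - l w)" for v
  have s1: "sum l V = l w + sum l (V - {w})" using finV w by (simp add: sum.remove)
  have "sum l' (V - {w}) = 1" using s1 ls lw by (simp add: l'_def sum_divide_distrib[symmetric])
  moreover have "w = comb l' (V - {w})"
  proof
    fix i
    have "w i = comb l V i" using wl by simp
    also have "\<dots> = l w * w i + (\<Sum>v\<in>V - {w}. l v * v i)" using finV w by (simp add: comb_def sum.remove)
    finally have "w i = l w * w i + (\<Sum>v\<in>V - {w}. l v * v i)" .
    then have "(1 - l w) * w i = (\<Sum>v\<in>V - {w}. l v * v i)" by (simp add: algebra_simps)
    then show "w i = comb l' (V - {w}) i" using lw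
      by (simp add: comb_def l'_def sum_divide_distrib[symmetric] field_simps)
  qed
  moreover have "\<forall>v\<in>V - {w}. 0 \<le> l' v" using lnn lw by (auto simp: l'_def)
  ultimately show ?thesis unfolding conv_hull_comb by blast
qed

lemma vert_gen: "finite V \<Longrightarrow> conv_hull (vertices (conv_hull V)) = conv_hull V"
proof (induction "card V" arbitrary: V rule: less_induct)
  case less
  show ?case
  proof (cases "V \<subseteq> vertices (conv_hull V)")
    case True
    then have "vertices (conv_hull V) = V" using vert_sub[OF less.prems] by blast
    then show ?thesis by simp
  next
    case False
    then obtain w where w: "w \<in> V" "w \<notin> vertices (conv_hull V)" by blast
    have fin': "finite (V - {w})" using less.prems by simp
    have "conv_hull (V - {w}) \<subseteq> conv_hull V"
      using in_conv_hull[OF less.prems] by (intro conv_sub[OF less.prems fin']) auto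
    moreover have "conv_hull V \<subseteq> conv_hull (V - {w})"
    proof (rule conv_sub[OF fin' less.prems], rule subsetI)
      fix x assume "x \<in> V"
      then show "x \<in> conv_hull (V - {w})"
        using in_conv_hull[OF fin'] nonvert_remove[OF less.prems w] by (cases "x = w") auto
    qed
    ultimately have eq: "conv_hull (V - {w}) = conv_hull V" by blast
    have "card (V - {w}) < card V" by (rule card_Diff1_less[OF less.prems w(1)])
    from less.hyps[OF this fin'] show ?thesis by (simp add: eq)
  qed
qed

lemma comb_lin: "comb (\<lambda>w. a w + c * b w) S i = comb a S i + c * comb b S i"
  by (simp add: comb_def distrib_right sum.distrib sum_distrib_left mult.assoc)

lemma small_eps:
  fixes l \<delta> :: "'a \<Rightarrow> real"
  assumes "finite S" "\<forall>w\<in>S. 0 < l w"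
  shows "\<exists>\<epsilon>>0. \<forall>w\<in>S. \<epsilon> * \<bar>\<delta> w\<bar> < l w"
proof (cases "S = {}")
  case True then show ?thesis by (intro exI[of _ 1]) auto
next
  case False
  define \<epsilon> where "\<epsilon> = Min ((\<lambda>w. l w / (\<bar>\<delta> w\<bar> + 1)) ` S)"
  have "\<epsilon> > 0" using assms False by (simp add: \<epsilon>_def Min_gr_iff)
  moreover have "\<epsilon> * \<bar>\<delta> w\<bar> < l w" if w: "w \<in> S" for w
  proof -
    have "\<epsilon> \<le> l w / (\<bar>\<delta> w\<bar> + 1)" using assms w by (simp add: \<epsilon>_def)
    then have "\<epsilon> * \<bar>\<delta> w\<bar> \<le> l w / (\<bar>\<delta> w\<bar> + 1) * \<bar>\<delta> w\<bar>" by (rule mult_right_mono) simp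
    also have "\<dots> < l w"
    proof -
      have "l w * \<bar>\<delta> w\<bar> < l w * (\<bar>\<delta> w\<bar> + 1)" using assms w by simp
      then show ?thesis by (simp add: field_simps)
    qed
    finally show ?thesis .
  qed
  ultimately show ?thesis by blast
qed

lemma cara_reduce:
  fixes l \<delta> :: "(nat \<Rightarrow> real) \<Rightarrow> real"
  assumes finS: "finite S" and lpos: "\<forall>w\<in>S. 0 < l w" and ls: "sum l S = 1"
    and ds: "sum \<delta> S = 0" and dc: "\<forall>i. comb \<delta> S i = 0" and w0: "w0 \<in> S" "\<delta> w0 \<noteq> 0"
  shows "\<exists>S' l'. S' \<subset> S \<and> (\<forall>w\<in>S'. 0 < l' w) \<and> sum l' S' = 1 \<and> comb l' S' = comb l S"
proof -
  define Ng where "Ng = {w\<in>S. \<delta> w < 0}"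
  have "Ng \<noteq> {}"
  proof
    assume "Ng = {}"
    then have "\<forall>w\<in>S. 0 \<le> \<delta> w" by (force simp: Ng_def)
    then have "\<forall>w\<in>S. \<delta> w = 0" using ds finS sum_nonneg_eq_0_iff by blast
    then show False using w0 by blast
  qed
  have finN: "finite Ng" using finS by (simp add: Ng_def)
  define \<tau> where "\<tau> = Min ((\<lambda>w. l w / (- \<delta> w)) ` Ng)"
  have "\<tau> \<in> (\<lambda>w. l w / (- \<delta> w)) ` Ng"
    unfolding \<tau>_def by (rule Min_in) (use finN \<open>Ng \<noteq> {}\<close> in auto)
  then obtain ws where ws: "ws \<in> Ng" "\<tau> = l ws / (- \<delta> ws)" by blast
  have tpos: "\<tau> > 0" using ws lpos by (auto simp: Ng_def divide_pos_neg)
  define l1 where "l1 w = l w + \<tau> * \<delta> w" for w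
  have l1nn: "0 \<le> l1 w" if w: "w \<in> S" for w
  proof (cases "\<delta> w < 0")
    case True
    then have "\<tau> \<le> l w / (- \<delta> w)" using finN w by (auto simp: \<tau>_def Ng_def)
    then have "\<tau> * (- \<delta> w) \<le> l w" using True by (simp add: field_simps)
    then show ?thesis by (simp add: l1_def)
  next
    case False
    then have "0 \<le> \<tau> * \<delta> w" using tpos by simp
    then show ?thesis using lpos w by (simp add: l1_def add_nonneg_nonneg less_imp_le)
  qed
  have l1ws: "l1 ws = 0" using ws by (auto simp: l1_def Ng_def field_simps)
  define S' where "S' = {w\<in>S. 0 < l1 w}"
  have "ws \<in> S" "ws \<notin> S'" using ws l1ws by (auto simp: S'_def Ng_def)
  then have "S' \<subset> S" by (auto simp: S'_def)
  moreover have "sum l1 S' = sum l1 S"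
    using finS l1nn by (intro sum.mono_neutral_left) (auto simp: S'_def less_le)
  moreover have "sum l1 S = 1" using ls ds by (simp add: l1_def sum.distrib sum_distrib_left[symmetric])
  moreover have "comb l1 S' = comb l1 S" unfolding comb_def
    using finS l1nn by (intro ext sum.mono_neutral_left) (auto simp: S'_def less_le)
  moreover have "comb l1 S = comb l S"
  proof
    fix i show "comb l1 S i = comb l S i" using dc unfolding l1_def comb_lin by simp
  qed
  ultimately show ?thesis by (intro exI[of _ S'] exI[of _ l1]) (auto simp: S'_def)
qed

lemma vertex_in_field:
  fixes W B :: "(nat\<Rightarrow>real) set" and \<alpha> :: "(nat\<Rightarrow>real) \<Rightarrow> (nat\<Rightarrow>real) \<Rightarrow> real"
  assumes finW: "finite W" and WR: "W \<subseteq> R_space N"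
    and P: "P = {x \<in> conv_hull W. \<forall>i. k \<le> i \<and> i < N \<longrightarrow> x i = 0}"
    and BW: "B \<subseteq> W"
    and indep: "\<forall>c. (\<forall>i. k \<le> i \<and> i < N \<longrightarrow> (\<Sum>u\<in>B. c u * u i) = 0) \<longrightarrow> (\<forall>u\<in>B. c u = 0)"
    and alpha: "\<forall>w\<in>W. \<forall>i. k \<le> i \<and> i < N \<longrightarrow> w i = (\<Sum>u\<in>B. \<alpha> w u * u i)"
    and sf: "subfield K"
    and aK: "\<forall>w\<in>W. \<forall>u\<in>B. \<alpha> w u \<in> K"
    and hK: "\<forall>w\<in>W. \<forall>i<k. w i - (\<Sum>u\<in>B. \<alpha> w u * u i) \<in> K"
    and v: "v \<in> vertices P"
  shows "v i \<in> K"
proof -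
  have finB: "finite B" using BW finW finite_subset by blast
  have vP: "v \<in> P" using v by (simp add: vertices_def)
  then have vQ: "v \<in> conv_hull W" and vH: "\<forall>i. k \<le> i \<and> i < N \<longrightarrow> v i = 0" using P by auto
  define good where "good S \<longleftrightarrow> S \<subseteq> W \<and> (\<exists>l. (\<forall>w\<in>S. 0 < l w) \<and> sum l S = 1 \<and> v = comb l S)" for S
  obtain u where u: "\<forall>w\<in>W. 0 \<le> u w" "sum u W = 1" "v = comb u W" using vQ by (auto simp: conv_hull_comb)
  have "good {w\<in>W. 0 < u w}"
  proof -
    have "sum u {w\<in>W. 0 < u w} = sum u W"
      using finW u(1) by (intro sum.mono_neutral_left) (auto simp: less_le)
    moreover have "comb u {w\<in>W. 0 < u w} = comb u W" unfolding comb_def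
      using finW u(1) by (intro ext sum.mono_neutral_left) (auto simp: less_le)
    ultimately show ?thesis unfolding good_def using u by (intro conjI exI[of _ u]) auto
  qed
  then obtain S where gS: "good S" and Smin: "\<And>S'. good S' \<Longrightarrow> card S \<le> card S'"
    using ex_has_least_nat[of good _ card] by blast
  from gS obtain l where SW: "S \<subseteq> W" and lpos: "\<forall>w\<in>S. 0 < l w" and ls: "sum l S = 1" and vl: "v = comb l S"
    unfolding good_def by blast
  have finS: "finite S" using SW finW finite_subset by blast
  have tail_comb: "comb m S i = (\<Sum>u\<in>B. (\<Sum>w\<in>S. m w * \<alpha> w u) * u i)" if "k \<le> i" "i < N" for m i
  proof -
    have "comb m S i = (\<Sum>w\<in>S. m w * (\<Sum>u\<in>B. \<alpha> w u * u i))"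
      unfolding comb_def
    proof (rule sum.cong[OF refl])
      fix w assume "w \<in> S"
      then have "w \<in> W" using SW by blast
      then have "w i = (\<Sum>u\<in>B. \<alpha> w u * u i)" using alpha that by blast
      then show "m w * w i = m w * (\<Sum>u\<in>B. \<alpha> w u * u i)" by (rule arg_cong)
    qed
    also have "\<dots> = (\<Sum>u\<in>B. (\<Sum>w\<in>S. m w * \<alpha> w u) * u i)"
      by (simp add: sum_distrib_left sum_distrib_right mult.assoc) (rule sum.swap)
    finally show ?thesis .
  qed
  have uniq: "\<forall>w\<in>S. m w = l w" if ms: "sum m S = 1" and ma: "\<forall>u\<in>B. (\<Sum>w\<in>S. m w * \<alpha> w u) = 0" for m
  proof (rule ccontr)
    assume nz: "\<not> (\<forall>w\<in>S. m w = l w)"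
    define \<delta> where "\<delta> w = m w - l w" for w
    have ds: "sum \<delta> S = 0" using ms ls by (simp add: \<delta>_def sum_subtractf)
    have dcomb: "comb \<delta> S i = comb m S i - v i" for i
      by (simp add: \<delta>_def comb_def vl left_diff_distrib sum_subtractf)
    have dtail: "comb \<delta> S i = 0" if "k \<le> i" "i < N" for i
      using dcomb[of i] tail_comb[OF that, of m] ma vH that by simp
    show False
    proof (cases "\<forall>i. comb \<delta> S i = 0")
      case True
      obtain w0 where "w0 \<in> S" "\<delta> w0 \<noteq> 0" using nz by (auto simp: \<delta>_def)
      from cara_reduce[OF finS lpos ls ds True this] obtain S' l' where
        S': "S' \<subset> S" "\<forall>w\<in>S'. 0 < l' w" "sum l' S' = 1" "comb l' S' = comb l S" by blast
      then have "good S'" using SW vl by (auto simp: good_def)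
      then have "card S \<le> card S'" by (rule Smin)
      moreover have "card S' < card S" by (rule psubset_card_mono[OF finS S'(1)])
      ultimately show False by simp
    next
      case False
      then obtain i0 where i0: "comb \<delta> S i0 \<noteq> 0" by blast
      obtain \<epsilon> where eps: "\<epsilon> > 0" "\<forall>w\<in>S. \<epsilon> * \<bar>\<delta> w\<bar> < l w" using small_eps[OF finS lpos] by blast
      define p1 where "p1 = comb (\<lambda>w. l w + \<epsilon> * \<delta> w) S"
      define p2 where "p2 = comb (\<lambda>w. l w + (- \<epsilon>) * \<delta> w) S"
      have p1i: "p1 i = v i + \<epsilon> * comb \<delta> S i" for i unfolding p1_def comb_lin vl ..
      have p2i: "p2 i = v i - \<epsilon> * comb \<delta> S i" for i unfolding p2_def comb_lin vl by simp
      have ab: "\<bar>\<epsilon> * \<delta> w\<bar> < l w" if "w \<in> S" for w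
        using eps that by (simp add: abs_mult)
      have w1: "\<forall>w\<in>S. 0 \<le> l w + \<epsilon> * \<delta> w" "\<forall>w\<in>S. 0 \<le> l w + (- \<epsilon>) * \<delta> w"
      proof (safe)
        fix w assume "w \<in> S"
        from ab[OF this] abs_ge_minus_self[of "\<epsilon> * \<delta> w"] abs_ge_self[of "\<epsilon> * \<delta> w"]
        show "0 \<le> l w + \<epsilon> * \<delta> w" "0 \<le> l w + (- \<epsilon>) * \<delta> w" by linarith+
      qed
      have s1: "sum (\<lambda>w. l w + \<epsilon> * \<delta> w) S = 1" "sum (\<lambda>w. l w + (- \<epsilon>) * \<delta> w) S = 1"
        using ls ds by (simp_all add: sum.distrib sum_subtractf sum_distrib_left[symmetric])
      have "p1 \<in> conv_hull W" "p2 \<in> conv_hull W"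
        unfolding p1_def p2_def using comb_in_conv_sub[OF finW SW] w1 s1 by auto
      moreover have "\<forall>i. k \<le> i \<and> i < N \<longrightarrow> p1 i = 0" "\<forall>i. k \<le> i \<and> i < N \<longrightarrow> p2 i = 0"
        using vH dtail p1i p2i by auto
      ultimately have pP: "p1 \<in> P" "p2 \<in> P" using P by auto
      have "p2 \<noteq> p1"
      proof
        assume "p2 = p1"
        then have "p2 i0 = p1 i0" by simp
        then show False using i0 eps p1i[of i0] p2i[of i0] by simp
      qed
      moreover have "v = (\<lambda>i. (1 - 1/2) * p2 i + 1/2 * p1 i)"
      proof
        fix i show "v i = (1 - 1/2) * p2 i + 1/2 * p1 i" using p1i[of i] p2i[of i] by (simp add: field_simps)
      qed
      moreover note pP
      ultimately have "\<exists>a\<in>P. \<exists>b\<in>P. a \<noteq> b \<and> (\<exists>t::real. 0 < t \<and> t < 1 \<and> v = (\<lambda>i. (1 - t) * a i + t * b i))"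
        by (intro bexI[of _ p2] bexI[of _ p1] conjI exI[of _ "1/2"]) simp_all
      then show False using v unfolding vertices_def by blast
    qed
  qed
  have lsolve: "\<forall>u\<in>B. (\<Sum>w\<in>S. l w * \<alpha> w u) = 0"
  proof -
    have "\<forall>i. k \<le> i \<and> i < N \<longrightarrow> (\<Sum>u\<in>B. (\<Sum>w\<in>S. l w * \<alpha> w u) * u i) = 0"
    proof (intro allI impI)
      fix i assume i: "k \<le> i \<and> i < N"
      have "(\<Sum>u\<in>B. (\<Sum>w\<in>S. l w * \<alpha> w u) * u i) = comb l S i" using tail_comb[of i l] i by simp
      also have "\<dots> = 0" using vl vH i by simp
      finally show "(\<Sum>u\<in>B. (\<Sum>w\<in>S. l w * \<alpha> w u) * u i) = 0" .
    qed
    then show ?thesis using spec[OF indep, of "\<lambda>u. \<Sum>w\<in>S. l w * \<alpha> w u"] by simp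
  qed
  define E :: "(((nat\<Rightarrow>real) \<Rightarrow> real) \<times> real) set" where "E = insert ((\<lambda>w. 1), 1) ((\<lambda>u. ((\<lambda>w. \<alpha> w u), 0)) ` B)"
  have lsolE: "x \<in> lsol S E \<longleftrightarrow> sum x S = 1 \<and> (\<forall>u\<in>B. (\<Sum>w\<in>S. x w * \<alpha> w u) = 0)" for x
  proof -
    have c: "(\<Sum>w\<in>S. \<alpha> w u * x w) = (\<Sum>w\<in>S. x w * \<alpha> w u)" for u
      by (rule sum.cong[OF refl]) (rule mult.commute)
    have "x \<in> lsol S E \<longleftrightarrow> (\<Sum>w\<in>S. 1 * x w) = 1 \<and> (\<forall>u\<in>B. (\<Sum>w\<in>S. \<alpha> w u * x w) = 0)"
      unfolding lsol_def E_def by simp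
    then show ?thesis unfolding c by simp
  qed
  have "\<forall>w\<in>S. l w \<in> K"
  proof (rule unique_sol_in_field[OF sf finS])
    show "\<forall>(a,b)\<in>E. (\<forall>j\<in>S. a j \<in> K) \<and> b \<in> K"
    proof -
      have "\<forall>j\<in>S. \<alpha> j u \<in> K" if "u \<in> B" for u using aK SW that by blast
      then show ?thesis using sf0[OF sf] sf1[OF sf] unfolding E_def by blast
    qed
    show "l \<in> lsol S E" using lsolE ls lsolve by blast
    show "\<forall>x\<in>lsol S E. \<forall>j\<in>S. x j = l j" using lsolE uniq by blast
  qed
  then have lK: "\<And>w. w \<in> S \<Longrightarrow> l w \<in> K" by blast
  show "v i \<in> K"
  proof (cases "i < k")
    case True
    have e1: "(\<Sum>w\<in>S. l w * (\<Sum>u\<in>B. \<alpha> w u * u i)) = (\<Sum>u\<in>B. (\<Sum>w\<in>S. l w * \<alpha> w u) * u i)"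
      by (simp add: sum_distrib_left sum_distrib_right mult.assoc) (rule sum.swap)
    have "v i = (\<Sum>w\<in>S. l w * (w i - (\<Sum>u\<in>B. \<alpha> w u * u i))) + (\<Sum>w\<in>S. l w * (\<Sum>u\<in>B. \<alpha> w u * u i))"
      by (simp only: vl comb_def sum.distrib[symmetric] right_diff_distrib diff_add_cancel)
    also note e1
    also have "(\<Sum>u\<in>B. (\<Sum>w\<in>S. l w * \<alpha> w u) * u i) = 0" using lsolve by simp
    finally have "v i = (\<Sum>w\<in>S. l w * (w i - (\<Sum>u\<in>B. \<alpha> w u * u i)))" by simp
    moreover have "(\<Sum>w\<in>S. l w * (w i - (\<Sum>u\<in>B. \<alpha> w u * u i))) \<in> K"
      using lK hK SW True by (intro sfsum[OF sf] sfmult[OF sf]) auto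
    ultimately show ?thesis by simp
  next
    case False
    show ?thesis
    proof (cases "i < N")
      case True then show ?thesis using vH False sf0[OF sf] by simp
    next
      case False
      have "\<forall>w\<in>S. w i = 0" using SW WR False by (auto simp: R_space_def)
      then have "v i = 0" unfolding vl comb_def by (intro sum.neutral) simp
      then show ?thesis using sf0[OF sf] by simp
    qed
  qed
qed

lemma trdeg_le:
  assumes finT: "finite T" and sub: "field_of P \<subseteq> gen_field T"
  shows "trdeg P \<le> card T"
proof -
  define X where "X = {card S | S. S \<subseteq> field_of P \<and> alg_indep_rat S}"
  have bnd: "x \<le> card T" if xX: "x \<in> X" for x
  proof -
    obtain S where "x = card S" "S \<subseteq> field_of P" "alg_indep_rat S" using xX unfolding X_def by blast
    then show ?thesis using trans_bound[OF finT, of S] sub by auto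
  qed
  have "Sup X \<le> card T"
  proof (cases "X = {}")
    case True then show ?thesis by simp
  next
    case False then show ?thesis using bnd by (intro cSup_least) auto
  qed
  then show ?thesis by (simp add: trdeg_def trdeg_field_def X_def)
qed

lemma final_arith:
  fixes t n r k :: nat
  assumes "r \<le> n" "t \<le> (n - r) * k + (n - r) * r"
  shows "2 * sqrt (real t) - real k \<le> real n"
proof -
  have "real t \<le> real (n - r) * (real k + real r)"
    using assms(2) by (metis distrib_left of_nat_add of_nat_le_iff of_nat_mult)
  also have "\<dots> \<le> ((real n + real k) / 2) ^ 2"
  proof -
    have "0 \<le> (real (n - r) - (real k + real r)) ^ 2" by simp
    then show ?thesis using assms(1) by (simp add: power2_eq_square algebra_simps of_nat_diff)
  qed
  finally have "sqrt (real t) \<le> sqrt (((real n + real k) / 2) ^ 2)" by (rule real_sqrt_le_mono)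
  also have "\<dots> = (real n + real k) / 2" by simp
  finally show ?thesis by simp
qed

theorem theorem2:
  fixes k :: nat and P :: "(nat \<Rightarrow> real) set"
  assumes "is_polytope k P"
  shows "real (ic k P) \<ge> 2 * sqrt (real (trdeg P)) - real k"
proof -
  have "is_slice k P k P" using assms by (auto simp: is_slice_def)
  then have "\<exists>N Q. is_slice k P N Q \<and> card (vertices Q) = card (vertices P)" by blast
  then have "\<exists>N Q. is_slice k P N Q \<and> card (vertices Q) = ic k P"
    unfolding ic_def by (rule LeastI)
  then obtain N Q where sl: "is_slice k P N Q" and icQ: "card (vertices Q) = ic k P" by blast
  from sl have kN: "k \<le> N" and PQ: "P = {x\<in>Q. \<forall>i. k \<le> i \<and> i < N \<longrightarrow> x i = 0}"
    and "is_polytope N Q" by (auto simp: is_slice_def)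
  then obtain V where finV: "finite V" and VR: "V \<subseteq> R_space N" and QV: "Q = conv_hull V"
    by (auto simp: is_polytope_def)
  define W where "W = vertices Q"
  have WV: "W \<subseteq> V" using vert_sub[OF finV] by (simp add: W_def QV)
  have finW: "finite W" using WV finV finite_subset by blast
  have WR: "W \<subseteq> R_space N" using WV VR by blast
  have QW: "Q = conv_hull W" using vert_gen[OF finV] by (simp add: W_def QV)
  define ind where "ind B \<longleftrightarrow> B \<subseteq> W \<and> (\<forall>c. (\<forall>i. k \<le> i \<and> i < N \<longrightarrow> (\<Sum>u\<in>B. c u * u i) = 0) \<longrightarrow> (\<forall>u\<in>B. c u = 0))" for B
  have "ind {}" by (simp add: ind_def)
  then obtain B where indB: "ind B" and Bmax: "\<And>B'. ind B' \<Longrightarrow> card W - card B \<le> card W - card B'"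
    using ex_has_least_nat[of ind "{}" "\<lambda>B. card W - card B"] by blast
  have BW: "B \<subseteq> W" and indep: "\<forall>c. (\<forall>i. k \<le> i \<and> i < N \<longrightarrow> (\<Sum>u\<in>B. c u * u i) = 0) \<longrightarrow> (\<forall>u\<in>B. c u = 0)"
    using indB by (auto simp: ind_def)
  have finB: "finite B" using BW finW finite_subset by blast
  have repr: "\<exists>a. \<forall>i. k \<le> i \<and> i < N \<longrightarrow> w i = (\<Sum>u\<in>B. a u * u i)" if w: "w \<in> W - B" for w
  proof -
    have "\<not> ind (insert w B)"
    proof
      assume "ind (insert w B)"
      then have "card W - card B \<le> card W - card (insert w B)" by (rule Bmax)
      moreover have "card (insert w B) \<le> card W" using w BW finW by (intro card_mono) auto
      moreover have "card (insert w B) = card B + 1" using w finB by simp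
      ultimately show False by simp
    qed
    then obtain c where c0: "\<forall>i. k \<le> i \<and> i < N \<longrightarrow> (\<Sum>u\<in>insert w B. c u * u i) = 0"
      and cnz: "\<exists>u\<in>insert w B. c u \<noteq> 0"
      using w BW unfolding ind_def by blast
    have cs: "c w * w i + (\<Sum>u\<in>B. c u * u i) = 0" if "k \<le> i" "i < N" for i
      using c0 that w finB by simp
    have cw: "c w \<noteq> 0"
    proof
      assume "c w = 0"
      then have "\<forall>i. k \<le> i \<and> i < N \<longrightarrow> (\<Sum>u\<in>B. c u * u i) = 0" using cs by simp
      then have "\<forall>u\<in>B. c u = 0" using spec[OF indep, of c] by simp
      then show False using cnz \<open>c w = 0\<close> by auto
    qed
    show ?thesis
    proof (intro exI[of _ "\<lambda>u. - c u / c w"] allI impI)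
      fix i assume i: "k \<le> i \<and> i < N"
      have "(\<Sum>u\<in>B. - c u / c w * u i) = - (\<Sum>u\<in>B. c u * u i) / c w"
        by (simp add: sum_divide_distrib sum_negf[symmetric])
      also have "\<dots> = w i" using cs[of i] i cw by (simp add: field_simps)
      finally show "w i = (\<Sum>u\<in>B. - c u / c w * u i)" by simp
    qed
  qed
  then obtain \<alpha>0 where \<alpha>0: "\<And>w. w \<in> W - B \<Longrightarrow> \<forall>i. k \<le> i \<and> i < N \<longrightarrow> w i = (\<Sum>u\<in>B. \<alpha>0 w u * u i)"
    by metis
  define \<alpha> where "\<alpha> w u = (if w \<in> B then (if w = u then 1 else 0) else \<alpha>0 w u)" for w u :: "nat \<Rightarrow> real"
  have sumB: "(\<Sum>u\<in>B. \<alpha> w u * u i) = w i" if "w \<in> B" for w i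
  proof -
    have "(\<Sum>u\<in>B. \<alpha> w u * u i) = (\<Sum>u\<in>B. if w = u then u i else 0)"
      using that by (intro sum.cong) (auto simp: \<alpha>_def)
    also have "\<dots> = w i" using that finB by (simp add: sum.delta)
    finally show ?thesis .
  qed
  have alpha: "\<forall>w\<in>W. \<forall>i. k \<le> i \<and> i < N \<longrightarrow> w i = (\<Sum>u\<in>B. \<alpha> w u * u i)"
  proof (intro ballI allI impI)
    fix w i assume w: "w \<in> W" and i: "k \<le> i \<and> i < N"
    show "w i = (\<Sum>u\<in>B. \<alpha> w u * u i)"
    proof (cases "w \<in> B")
      case True then show ?thesis using sumB by simp
    next
      case False
      then have "(\<Sum>u\<in>B. \<alpha> w u * u i) = (\<Sum>u\<in>B. \<alpha>0 w u * u i)" by (simp add: \<alpha>_def)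
      then show ?thesis using \<alpha>0[of w] w False i by simp
    qed
  qed
  define h where "h w i = w i - (\<Sum>u\<in>B. \<alpha> w u * u i)" for w i
  define T where "T = (\<lambda>(w,i). h w i) ` ((W - B) \<times> {..<k}) \<union> (\<lambda>(w,u). \<alpha> w u) ` ((W - B) \<times> B)"
  have finT: "finite T" using finW finB by (simp add: T_def)
  have cardT: "card T \<le> (card W - card B) * k + (card W - card B) * card B"
  proof -
    have "card T \<le> card ((\<lambda>(w,i). h w i) ` ((W - B) \<times> {..<k})) + card ((\<lambda>(w,u). \<alpha> w u) ` ((W - B) \<times> B))"
      unfolding T_def by (rule card_Un_le)
    also have "\<dots> \<le> card ((W - B) \<times> {..<k}) + card ((W - B) \<times> B)"
      by (intro add_mono card_image_le) (use finW finB in auto)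
    also have "\<dots> = (card W - card B) * k + (card W - card B) * card B"
      using finW finB BW by (simp add: card_cartesian_product card_Diff_subset)
    finally show ?thesis .
  qed
  define K where "K = gen_field T"
  have sf: "subfield K" unfolding K_def by (rule subfield_gen_field)
  have TK: "T \<subseteq> K" unfolding K_def by (rule gen_field_sub)
  have aK: "\<forall>w\<in>W. \<forall>u\<in>B. \<alpha> w u \<in> K"
  proof (intro ballI)
    fix w u assume "w \<in> W" "u \<in> B"
    then show "\<alpha> w u \<in> K"
    proof (cases "w \<in> B")
      case True then show ?thesis using sf0[OF sf] sf1[OF sf] by (simp add: \<alpha>_def)
    next
      case False
      then have "\<alpha> w u \<in> T" using \<open>w \<in> W\<close> \<open>u \<in> B\<close> unfolding T_def by force
      then show ?thesis using TK by blast
    qed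
  qed
  have hK: "\<forall>w\<in>W. \<forall>i<k. w i - (\<Sum>u\<in>B. \<alpha> w u * u i) \<in> K"
  proof (intro ballI allI impI)
    fix w i assume w: "w \<in> W" and i: "i < k"
    show "w i - (\<Sum>u\<in>B. \<alpha> w u * u i) \<in> K"
    proof (cases "w \<in> B")
      case True then show ?thesis using sumB sf0[OF sf] by simp
    next
      case False
      then have "h w i \<in> T" using w i unfolding T_def by force
      then show ?thesis using TK by (auto simp: h_def)
    qed
  qed
  have PW: "P = {x \<in> conv_hull W. \<forall>i. k \<le> i \<and> i < N \<longrightarrow> x i = 0}" using PQ QW by simp
  have "\<forall>v\<in>vertices P. \<forall>i. v i \<in> K"
    using vertex_in_field[OF finW WR PW BW indep alpha sf aK hK] by blast
  then have "{v i | v i. v \<in> vertices P} \<subseteq> K" by blast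
  then have "field_of P \<subseteq> K" unfolding field_of_def by (rule gen_field_least[OF _ sf])
  then have "trdeg P \<le> card T" using trdeg_le[OF finT] by (simp add: K_def)
  then have "trdeg P \<le> (card W - card B) * k + (card W - card B) * card B" using cardT by linarith
  moreover have "card B \<le> card W" using BW finW by (rule card_mono[rotated])
  ultimately have "2 * sqrt (real (trdeg P)) - real k \<le> real (card W)"
    by (intro final_arith) auto
  then show ?thesis using icQ by (simp add: W_def)
qed

end
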